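(* Let $\mathrm{AF}_{\mathcal R}(Y^{++})$ be the set of families $(x_\lambda)\in\mathcal R^{Y^{++}}$ with almost finite support. For every $(x_\lambda)\in\mathrm{AF}_{\mathcal R}(Y^{++})$ the family $(x_\lambda E(\lambda))_{\lambda\in Y^{++}}$ is summable in $\mathcal R[[Y]]$, and the map $E:\mathrm{AF}_{\mathcal R}(Y^{++})\to\mathcal R[[Y]]^{W^v}$, $(x_\lambda)\mapsto\sum_{\lambda\in Y^{++}}x_\lambda E(\lambda)$, is a well-defined bijection. In particular every element of $\mathcal R[[Y]]^{W^v}$ has support contained in $Y^+$.
   Context: $I$ finite, $A$ a generalized Cartan matrix, $X,Y$ dual free $\mathbb Z$-modules of finite rank with free families $(\alpha_i)_{i\in I}\subset X$, $(\alpha_i^\vee)_{i\in I}\subset Y$, $\alpha_j(\alpha_i^\vee)=a_{i,j}$; $\mathbb A=Y\otimes\mathbb R$; $r_i(v)=v-\alpha_i(v)\alpha_i^\vee$; $W^v=\langle r_i\rangle$; $Q^\vee_+=\bigoplus\mathbb N\alpha_i^\vee$ and $x\le_{Q^\vee}y$ iff $y-x\in Q^\vee_+$; $C^v_f=\{\alpha_i>0\ \forall i\}$, $\mathcal T=\bigcup_w w\overline{C^v_f}$, $Y^+=Y\cap\mathcal T$, $Y^{++}=Y\cap\overline{C^v_f}$. A set $E\subset Y$ is almost finite if there is a finite $J\subset Y$ with every element of $E$ $\le_{Q^\vee}$ some element of $J$. $\mathcal R$ is a commutative ring. $\mathcal R[[Y]]$ is the set of formal series $\sum_{\lambda\in Y}a_\lambda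 e^\lambda$ with almost finite support, with $e^\lambda e^\mu=e^{\lambda+\mu}$; $\mathcal R[[Y]]^{W^v}$ is the set of such series with $a_{w(\lambda)}=a_\lambda$ for all $w\in W^v$. A family $(a_j)_{j\in J}$ in $\mathcal R[[Y]]$ is summable if for each $\lambda$ only finitely many $a_j$ have nonzero coefficient at $e^\lambda$ and the union of the supports is almost finite; its sum is taken coefficientwise. For $\lambda\in Y^{++}$, $E(\lambda)=\sum_{\mu\in W^v\lambda}e^\mu\in\mathcal R[[Y]]$. *)

theory Defs
  imports Main
begin

text \<open>The lattice Y is modelled as the functions 'n \<Rightarrow> int for a finite
type 'n (a free Z-module of finite rank CARD('n)).  Its dual X = Hom(Y,Z) is modelled by
the same type, via the perfect pairing below.  The index set I is a finite set of naturals.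
al i is the root alpha_i in X, alv i the coroot alpha_i^vee in Y.\<close>

type_synonym 'n lat = "'n \<Rightarrow> int"

definition pairing :: "'n::finite lat \<Rightarrow> 'n lat \<Rightarrow> int" where
  "pairing a y = (\<Sum>k\<in>UNIV. a k * y k)"

definition free_family :: "nat set \<Rightarrow> (nat \<Rightarrow> 'n::finite lat) \<Rightarrow> bool" where
  "free_family I f \<longleftrightarrow>
     (\<forall>c :: nat \<Rightarrow> int. (\<forall>k. (\<Sum>i\<in>I. c i * f i k) = 0) \<longrightarrow> (\<forall>i\<in>I. c i = 0))"

definition gen_cartan_matrix :: "nat set \<Rightarrow> (nat \<Rightarrow> nat \<Rightarrow> int) \<Rightarrow> bool" where
  "gen_cartan_matrix I a \<longleftrightarrow>
     (\<forall>i\<in>I. a i i = 2) \<and>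
     (\<forall>i\<in>I. \<forall>j\<in>I. i \<noteq> j \<longrightarrow> a i j \<le> 0) \<and>
     (\<forall>i\<in>I. \<forall>j\<in>I. a i j = 0 \<longleftrightarrow> a j i = 0)"

definition cartan :: "(nat \<Rightarrow> 'n::finite lat) \<Rightarrow> (nat \<Rightarrow> 'n lat) \<Rightarrow> nat \<Rightarrow> nat \<Rightarrow> int" where
  "cartan al alv i j = pairing (al j) (alv i)"

definition sref :: "(nat \<Rightarrow> 'n::finite lat) \<Rightarrow> (nat \<Rightarrow> 'n lat) \<Rightarrow> nat \<Rightarrow> 'n lat \<Rightarrow> 'n lat" where
  "sref al alv i v = (\<lambda>k. v k - pairing (al i) v * alv i k)"

text \<open>The vectorial Weyl group W^v generated by the r_i (the r_i are involutions,
so the monoid they generate is the group they generate).\<close>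
inductive_set weyl :: "nat set \<Rightarrow> (nat \<Rightarrow> 'n::finite lat) \<Rightarrow> (nat \<Rightarrow> 'n lat) \<Rightarrow> ('n lat \<Rightarrow> 'n lat) set"
  for I al alv where
  weyl_id: "id \<in> weyl I al alv"
| weyl_step: "w \<in> weyl I al alv \<Longrightarrow> i \<in> I \<Longrightarrow> sref al alv i \<circ> w \<in> weyl I al alv"

definition Ypp :: "nat set \<Rightarrow> (nat \<Rightarrow> 'n::finite lat) \<Rightarrow> 'n lat set" where
  "Ypp I al = {y. \<forall>i\<in>I. pairing (al i) y \<ge> 0}"

text \<open>Y^+ = Y \<inter> Tits cone = union of the w(Y^{++}).\<close>
definition Yp :: "nat set \<Rightarrow> (nat \<Rightarrow> 'n::finite lat) \<Rightarrow> (nat \<Rightarrow> 'n lat) \<Rightarrow> 'n lat set" where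
  "Yp I al alv = {w y | w y. w \<in> weyl I al alv \<and> y \<in> Ypp I al}"

definition Qvee_plus :: "nat set \<Rightarrow> (nat \<Rightarrow> 'n::finite lat) \<Rightarrow> 'n lat set" where
  "Qvee_plus I alv = {(\<lambda>k. \<Sum>i\<in>I. int (m i) * alv i k) | m :: nat \<Rightarrow> nat. True}"

definition leQ :: "nat set \<Rightarrow> (nat \<Rightarrow> 'n::finite lat) \<Rightarrow> 'n lat \<Rightarrow> 'n lat \<Rightarrow> bool" where
  "leQ I alv x y \<longleftrightarrow> (\<lambda>k. y k - x k) \<in> Qvee_plus I alv"

definition almost_finite :: "nat set \<Rightarrow> (nat \<Rightarrow> 'n::finite lat) \<Rightarrow> 'n lat set \<Rightarrow> bool" where
  "almost_finite I alv E \<longleftrightarrow> (\<exists>J. finite J \<and> (\<forall>e\<in>E. \<exists>j\<in>J. leQ I alv e j))"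

definition supp :: "('a \<Rightarrow> 'r::zero) \<Rightarrow> 'a set" where
  "supp a = {x. a x \<noteq> 0}"

text \<open>R[[Y]]: a series sum a_lambda e^lambda is represented by its coefficient function.\<close>
definition series :: "nat set \<Rightarrow> (nat \<Rightarrow> 'n::finite lat) \<Rightarrow> ('n lat \<Rightarrow> 'r::comm_ring_1) set" where
  "series I alv = {a. almost_finite I alv (supp a)}"

definition inv_series ::
  "nat set \<Rightarrow> (nat \<Rightarrow> 'n::finite lat) \<Rightarrow> (nat \<Rightarrow> 'n lat) \<Rightarrow> ('n lat \<Rightarrow> 'r::comm_ring_1) set" where
  "inv_series I al alv =
     {a \<in> series I alv. \<forall>w\<in>weyl I al alv. \<forall>lam. a (w lam) = a lam}"

definition summable_fam ::
  "nat set \<Rightarrow> (nat \<Rightarrow> 'n::finite lat) \<Rightarrow> 'j set \<Rightarrow> ('j \<Rightarrow> 'n lat \<Rightarrow> 'r::comm_ring_1) \<Rightarrow> bool" where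
  "summable_fam I alv J f \<longleftrightarrow>
     (\<forall>j\<in>J. f j \<in> series I alv) \<and>
     (\<forall>lam. finite {j\<in>J. f j lam \<noteq> 0}) \<and>
     almost_finite I alv (\<Union>j\<in>J. supp (f j))"

definition fam_sum :: "'j set \<Rightarrow> ('j \<Rightarrow> 'n lat \<Rightarrow> 'r::comm_ring_1) \<Rightarrow> 'n lat \<Rightarrow> 'r" where
  "fam_sum J f = (\<lambda>lam. \<Sum>j\<in>{j\<in>J. f j lam \<noteq> 0}. f j lam)"

definition Eorb ::
  "nat set \<Rightarrow> (nat \<Rightarrow> 'n::finite lat) \<Rightarrow> (nat \<Rightarrow> 'n lat) \<Rightarrow> 'n lat \<Rightarrow> 'n lat \<Rightarrow> 'r::comm_ring_1" where
  "Eorb I al alv lam = (\<lambda>mu. if mu \<in> (\<lambda>w. w lam) ` weyl I al alv then 1 else 0)"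

text \<open>AF_R(Y^{++}): families indexed by Y^{++} (extended by 0 outside Y^{++})
with almost finite support.\<close>
definition AF :: "nat set \<Rightarrow> (nat \<Rightarrow> 'n::finite lat) \<Rightarrow> (nat \<Rightarrow> 'n lat) \<Rightarrow> ('n lat \<Rightarrow> 'r::comm_ring_1) set" where
  "AF I al alv = {x. (\<forall>lam. lam \<notin> Ypp I al \<longrightarrow> x lam = 0) \<and> almost_finite I alv (supp x)}"

definition Emap ::
  "nat set \<Rightarrow> (nat \<Rightarrow> 'n::finite lat) \<Rightarrow> (nat \<Rightarrow> 'n lat) \<Rightarrow> ('n lat \<Rightarrow> 'r::comm_ring_1) \<Rightarrow> 'n lat \<Rightarrow> 'r" where
  "Emap I al alv x = fam_sum (Ypp I al) (\<lambda>lam mu. x lam * Eorb I al alv lam mu)"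

end

theory Submission
  imports Defs "HOL-Library.FuncSet"
begin


lemma pairing_lin: "pairing a (\<lambda>k. v k + c * w k) = pairing a v + c * pairing a w"
  unfolding pairing_def by (simp add: algebra_simps sum.distrib sum_distrib_left)

lemma pairing_lin2: "pairing a (\<lambda>k. v k - c * w k) = pairing a v - c * pairing a w"
  unfolding pairing_def by (simp add: algebra_simps sum_subtractf sum_distrib_left)

lemma pairing_lin3: "pairing a (\<lambda>k. v k + p * w k + q * z k) = pairing a v + p * pairing a w + q * pairing a z"
  unfolding pairing_def by (simp add: algebra_simps sum.distrib sum_distrib_left)

primrec rw :: "(nat \<Rightarrow> 'n::finite lat) \<Rightarrow> (nat \<Rightarrow> 'n lat) \<Rightarrow> nat list \<Rightarrow> 'n lat \<Rightarrow> 'n lat" where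
  "rw al alv [] = id"
| "rw al alv (i # ws) = sref al alv i \<circ> rw al alv ws"

lemma rw_append: "rw al alv (xs @ ys) = rw al alv xs \<circ> rw al alv ys"
  by (induction xs) auto

definition WS :: "(nat \<Rightarrow> 'n::finite lat) \<Rightarrow> (nat \<Rightarrow> 'n lat) \<Rightarrow> nat set \<Rightarrow> ('n lat \<Rightarrow> 'n lat) set" where
  "WS al alv S = {rw al alv ws | ws. set ws \<subseteq> S}"

definition wl :: "(nat \<Rightarrow> 'n::finite lat) \<Rightarrow> (nat \<Rightarrow> 'n lat) \<Rightarrow> nat set \<Rightarrow> ('n lat \<Rightarrow> 'n lat) \<Rightarrow> nat" where
  "wl al alv S w = (LEAST n. \<exists>ws. set ws \<subseteq> S \<and> length ws = n \<and> rw al alv ws = w)"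

lemma wl_le: "set ws \<subseteq> S \<Longrightarrow> wl al alv S (rw al alv ws) \<le> length ws"
  unfolding wl_def by (rule Least_le) auto

lemma wl_word: assumes "w \<in> WS al alv S"
  shows "\<exists>ws. set ws \<subseteq> S \<and> length ws = wl al alv S w \<and> rw al alv ws = w"
proof -
  from assms obtain ws where "set ws \<subseteq> S" "rw al alv ws = w" unfolding WS_def by auto
  then have "\<exists>n ws. set ws \<subseteq> S \<and> length ws = n \<and> rw al alv ws = w" by auto
  then show ?thesis unfolding wl_def by (rule LeastI_ex)
qed

lemma WS_rw: "set ws \<subseteq> S \<Longrightarrow> rw al alv ws \<in> WS al alv S"
  unfolding WS_def by auto

lemma WS_comp: "x \<in> WS al alv S \<Longrightarrow> y \<in> WS al alv S \<Longrightarrow> x \<circ> y \<in> WS al alv S"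
proof -
  assume "x \<in> WS al alv S" "y \<in> WS al alv S"
  then obtain xs ys where "set xs \<subseteq> S" "set ys \<subseteq> S" "x = rw al alv xs" "y = rw al alv ys"
    unfolding WS_def by auto
  then show ?thesis using WS_rw[of "xs @ ys" S al alv] by (simp add: rw_append)
qed

lemma WS_mono: "S \<subseteq> T \<Longrightarrow> x \<in> WS al alv S \<Longrightarrow> x \<in> WS al alv T"
  unfolding WS_def by auto

lemma WS_sref: "i \<in> S \<Longrightarrow> sref al alv i \<in> WS al alv S"
  using WS_rw[of "[i]" S al alv] by simp

lemma wl_comp: assumes "x \<in> WS al alv S" "y \<in> WS al alv S"
  shows "wl al alv S (x \<circ> y) \<le> wl al alv S x + wl al alv S y"
proof -
  obtain xs where xs: "set xs \<subseteq> S" "length xs = wl al alv S x" "rw al alv xs = x" using wl_word[OF assms(1)] by auto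
  obtain ys where ys: "set ys \<subseteq> S" "length ys = wl al alv S y" "rw al alv ys = y" using wl_word[OF assms(2)] by auto
  have "wl al alv S (rw al alv (xs @ ys)) \<le> length (xs @ ys)" using xs ys by (intro wl_le) auto
  then show ?thesis using xs ys by (simp add: rw_append)
qed

lemma wl_mono: assumes "S \<subseteq> T" "x \<in> WS al alv S" shows "wl al alv T x \<le> wl al alv S x"
proof -
  obtain xs where xs: "set xs \<subseteq> S" "length xs = wl al alv S x" "rw al alv xs = x" using wl_word[OF assms(2)] by auto
  then show ?thesis using wl_le[of xs T al alv] assms(1) by auto
qed

lemma wl_sref: "i \<in> S \<Longrightarrow> wl al alv S (sref al alv i) \<le> 1"
  using wl_le[of "[i]" S al alv] by simp

lemma wl_zero: assumes "w \<in> WS al alv S" "wl al alv S w = 0" shows "w = id"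
  using wl_word[OF assms(1)] assms(2) by auto

lemma sref_sref: assumes "pairing (al i) (alv i) = 2"
  shows "sref al alv i (sref al alv i v) = v"
proof -
  have "pairing (al i) (\<lambda>k. v k - pairing (al i) v * alv i k) = - pairing (al i) v"
    by (subst pairing_lin2) (simp add: assms)
  then show ?thesis unfolding sref_def by (intro ext) simp
qed

lemma sref_sref_comp: assumes "pairing (al i) (alv i) = 2"
  shows "sref al alv i \<circ> (sref al alv i \<circ> f) = f"
  by (rule ext) (simp add: sref_sref[of al i alv] assms)

lemma weyl_WS: "weyl I al alv = WS al alv I"
proof
  show "weyl I al alv \<subseteq> WS al alv I"
  proof
    fix w assume "w \<in> weyl I al alv" then show "w \<in> WS al alv I"
    proof induction
      case weyl_id then show ?case using WS_rw[of "[]" I al alv] by (simp add: id_def)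
    next
      case (weyl_step w i) then show ?case using WS_comp WS_sref by blast
    qed
  qed
next
  show "WS al alv I \<subseteq> weyl I al alv"
  proof
    fix w assume "w \<in> WS al alv I"
    then obtain ws where "set ws \<subseteq> I" "w = rw al alv ws" unfolding WS_def by auto
    then show "w \<in> weyl I al alv"
    proof (induction ws arbitrary: w)
      case Nil then show ?case using weyl_id[of I al alv] by (simp add: id_def)
    next
      case (Cons i ws)
      then have "rw al alv ws \<in> weyl I al alv" "i \<in> I" by auto
      then have "sref al alv i \<circ> rw al alv ws \<in> weyl I al alv" by (rule weyl_step)
      then show ?case using Cons.prems by (simp add: comp_def)
    qed
  qed
qed



fun altw :: "nat \<Rightarrow> nat \<Rightarrow> nat \<Rightarrow> nat list" where
  "altw a b 0 = []"
| "altw a b (Suc n) = a # altw b a n"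

lemma altw_length[simp]: "length (altw a b n) = n"
  by (induction n arbitrary: a b) auto

lemma altw_set: "set (altw a b n) \<subseteq> {a, b}"
  by (induction n arbitrary: a b) auto

lemma altw_snoc: "altw a b (Suc n) = altw a b n @ [if even n then a else b]"
  by (induction n arbitrary: a b) auto

lemma altw_add: "altw a b (m + r) = altw a b m @ (if even m then altw a b r else altw b a r)"
  by (induction m arbitrary: a b) auto

lemma pairing_sref: "pairing (al m) (sref al alv l v) = pairing (al m) v - pairing (al l) v * pairing (al m) (alv l)"
  unfolding sref_def by (rule pairing_lin2)

fun coef :: "int \<Rightarrow> int \<Rightarrow> nat \<Rightarrow> int \<times> int" where
  "coef aij aji 0 = (1, 0)"
| "coef aij aji (Suc n) = (let (c, d) = coef aij aji n in
      if even n then (c, - aji * c - d) else (- aij * d - c, d))"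

lemma coef_formula:
  assumes "pairing (al i) (alv i) = 2" "pairing (al j) (alv j) = 2"
  shows "pairing (al i) (rw al alv (altw j i n) v) =
    fst (coef (pairing (al j) (alv i)) (pairing (al i) (alv j)) n) * pairing (al i) v
  + snd (coef (pairing (al j) (alv i)) (pairing (al i) (alv j)) n) * pairing (al j) v"
proof (induction n arbitrary: v)
  case 0 then show ?case by simp
next
  case (Suc n)
  obtain c d where cd: "coef (pairing (al j) (alv i)) (pairing (al i) (alv j)) n = (c, d)" by fastforce
  show ?case
  proof (cases "even n")
    case True
    have "pairing (al i) (rw al alv (altw j i (Suc n)) v) = pairing (al i) (rw al alv (altw j i n) (sref al alv j v))"
      using True by (subst altw_snoc) (simp add: rw_append)
    also have "\<dots> = c * pairing (al i) (sref al alv j v) + d * pairing (al j) (sref al alv j v)"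
      using Suc cd by simp
    also have "\<dots> = c * pairing (al i) v + (- pairing (al i) (alv j) * c - d) * pairing (al j) v"
      by (simp add: pairing_sref assms algebra_simps)
    finally show ?thesis using True cd by simp
  next
    case False
    have "pairing (al i) (rw al alv (altw j i (Suc n)) v) = pairing (al i) (rw al alv (altw j i n) (sref al alv i v))"
      using False by (subst altw_snoc) (simp add: rw_append)
    also have "\<dots> = c * pairing (al i) (sref al alv i v) + d * pairing (al j) (sref al alv i v)"
      using Suc cd by simp
    also have "\<dots> = (- pairing (al j) (alv i) * d - c) * pairing (al i) v + d * pairing (al j) v"
      by (simp add: pairing_sref assms algebra_simps)
    finally show ?thesis using False cd by simp
  qed
qed

fun Sst :: "int \<Rightarrow> int \<Rightarrow> int \<Rightarrow> int \<Rightarrow> bool \<Rightarrow> nat \<Rightarrow> int \<times> int" where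
  "Sst aij aji x y b 0 = (0, 0)"
| "Sst aij aji x y True (Suc n) = (let (p, q) = Sst aij aji x y False n in (p - (x + 2 * p + q * aji), q))"
| "Sst aij aji x y False (Suc n) = (let (p, q) = Sst aij aji x y True n in (p, q - (y + p * aij + 2 * q)))"

lemma rw_state:
  fixes v :: "'n::finite lat" and al alv :: "nat \<Rightarrow> 'n lat"
  assumes "pairing (al i) (alv i) = 2" "pairing (al j) (alv j) = 2"
  defines "aij \<equiv> pairing (al j) (alv i)" and "aji \<equiv> pairing (al i) (alv j)"
  defines "x \<equiv> pairing (al i) v" and "y \<equiv> pairing (al j) v"
  shows "rw al alv (altw i j n) v = (\<lambda>k. v k + fst (Sst aij aji x y True n) * alv i k + snd (Sst aij aji x y True n) * alv j k)
       \<and> rw al alv (altw j i n) v = (\<lambda>k. v k + fst (Sst aij aji x y False n) * alv i k + snd (Sst aij aji x y False n) * alv j k)"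
proof (induction n)
  case 0 then show ?case by simp
next
  case (Suc n)
  obtain p q where pq: "Sst aij aji x y False n = (p, q)" by fastforce
  obtain p' q' where pq': "Sst aij aji x y True n = (p', q')" by fastforce
  have 1: "rw al alv (altw i j (Suc n)) v = sref al alv i (\<lambda>k. v k + p * alv i k + q * alv j k)"
    using Suc pq by simp
  have 2: "rw al alv (altw j i (Suc n)) v = sref al alv j (\<lambda>k. v k + p' * alv i k + q' * alv j k)"
    using Suc pq' by simp
  have e1: "pairing (al i) (\<lambda>k. v k + p * alv i k + q * alv j k) = x + 2 * p + q * aji"
    by (simp add: pairing_lin3 assms x_def aji_def)
  have e2: "pairing (al j) (\<lambda>k. v k + p' * alv i k + q' * alv j k) = y + p' * aij + 2 * q'"
    by (simp add: pairing_lin3 assms y_def aij_def)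
  show ?case
    unfolding 1 2 sref_def e1 e2 using pq pq' by (auto simp: algebra_simps)
qed



lemma cartan_cases:
  fixes a b :: int
  assumes "a \<le> 0" "b \<le> 0" "a = 0 \<longleftrightarrow> b = 0" "a * b < 4"
  shows "(a = 0 \<and> b = 0) \<or> (a = -1 \<and> b = -1) \<or> (a = -1 \<and> b = -2) \<or> (a = -2 \<and> b = -1)
      \<or> (a = -1 \<and> b = -3) \<or> (a = -3 \<and> b = -1)"
proof (cases "a = 0")
  case True then show ?thesis using assms by auto
next
  case False
  then have a1: "a \<le> -1" "b \<le> -1" using assms by auto
  have "a * b \<ge> - a" using mult_left_mono_neg[of b "-1" a] a1 by simp
  moreover have "a * b \<ge> - b" using mult_right_mono_neg[of a "-1" b] a1 by simp
  ultimately have "a \<ge> -3" "b \<ge> -3" using assms(4) by auto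
  then have "a \<in> {-3, -2, -1}" "b \<in> {-3,-2,-1}" using a1 by auto
  then show ?thesis using assms(4) by auto
qed

lemma finite_case:
  fixes a b :: int
  assumes "a \<le> 0" "b \<le> 0" "a = 0 \<longleftrightarrow> b = 0" "a * b < 4"
  shows "\<exists>m\<ge>1. (\<forall>x y. Sst a b x y True m = Sst a b x y False m) \<and>
      (\<forall>n<m. fst (coef a b n) \<ge> 0 \<and> snd (coef a b n) \<ge> 0)"
proof -
  have c: "(a = 0 \<and> b = 0) \<or> (a = -1 \<and> b = -1) \<or> (a = -1 \<and> b = -2) \<or> (a = -2 \<and> b = -1)
      \<or> (a = -1 \<and> b = -3) \<or> (a = -3 \<and> b = -1)" by (rule cartan_cases[OF assms])
  show ?thesis
  proof -
    { assume "a = 0 \<and> b = 0"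
      then have ?thesis
        apply (intro exI[of _ 2])
        apply (auto simp: numeral_eq_Suc less_Suc_eq)
        done }
    moreover
    { assume "a = -1 \<and> b = -1"
      then have ?thesis
        apply (intro exI[of _ 3])
        apply (auto simp: numeral_eq_Suc less_Suc_eq)
        done }
    moreover
    { assume "a = -1 \<and> b = -2 \<or> a = -2 \<and> b = -1"
      then have ?thesis
        apply (intro exI[of _ 4])
        apply (auto simp: numeral_eq_Suc less_Suc_eq)
        done }
    moreover
    { assume "a = -1 \<and> b = -3 \<or> a = -3 \<and> b = -1"
      then have ?thesis
        apply (intro exI[of _ 6])
        apply (auto simp: numeral_eq_Suc less_Suc_eq)
        done }
    ultimately show ?thesis using c by blast
  qed
qed



lemma infinite_case_inv:
  fixes a b :: int
  assumes "a \<le> 0" "b \<le> 0" "a * b \<ge> 4"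
  shows "fst (coef a b n) \<ge> 0 \<and> snd (coef a b n) \<ge> 0 \<and>
     (if even n then - b * fst (coef a b n) \<ge> 2 * snd (coef a b n)
      else - a * snd (coef a b n) \<ge> 2 * fst (coef a b n))"
proof (induction n)
  case 0 then show ?case using assms by simp
next
  case (Suc n)
  obtain c d where cd: "coef a b n = (c, d)" by fastforce
  define A where "A = - a"
  define B where "B = - b"
  have A: "A \<ge> 0" and B: "B \<ge> 0" and AB: "A * B \<ge> 4" using assms by (auto simp: A_def B_def)
  show ?case
  proof (cases "even n")
    case True
    then have h: "c \<ge> 0" "d \<ge> 0" "B * c \<ge> 2 * d" using Suc cd by (auto simp: B_def)
    have 1: "B * c - d \<ge> 0" using h by linarith
    have 2: "A * (B * c) \<ge> A * (2 * d)" using h A by (intro mult_left_mono) auto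
    have 3: "(A * B) * c \<ge> 4 * c" using AB h by (intro mult_right_mono) auto
    have 4: "A * (B * c - d) \<ge> 2 * c" using 2 3 by (simp add: algebra_simps)
    show ?thesis using True cd 1 4 h by (simp add: A_def B_def algebra_simps)
  next
    case False
    then have h: "c \<ge> 0" "d \<ge> 0" "A * d \<ge> 2 * c" using Suc cd by (auto simp: A_def)
    have 1: "A * d - c \<ge> 0" using h by linarith
    have 2: "B * (A * d) \<ge> B * (2 * c)" using h B by (intro mult_left_mono) auto
    have 3: "(A * B) * d \<ge> 4 * d" using AB h by (intro mult_right_mono) auto
    have 4: "B * (A * d - c) \<ge> 2 * d" using 2 3 by (simp add: algebra_simps)
    show ?thesis using False cd 1 4 h by (simp add: A_def B_def algebra_simps)
  qed
qed



lemma alt_shape: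
  assumes "set ws \<subseteq> {i, j}" "i \<noteq> j" "\<forall>ws'. ws \<noteq> i # ws'" "\<forall>xs k ys. ws \<noteq> xs @ k # k # ys"
  shows "ws = altw j i (length ws)"
  using assms
proof (induction ws arbitrary: i j)
  case Nil then show ?case by simp
next
  case (Cons l ws)
  then have l: "l = j" by auto
  have a: "set ws \<subseteq> {j, i}" using Cons.prems by auto
  have b: "\<forall>ws'. ws \<noteq> j # ws'" using Cons.prems(4) l by (metis append_Nil)
  have c: "\<forall>xs k ys. ws \<noteq> xs @ k # k # ys" using Cons.prems(4) by (metis append_Cons)
  have "ws = altw i j (length ws)" using Cons.IH[OF a _ b c] Cons.prems(2) by auto
  then show ?case using l by simp
qed

lemma R2:
  fixes al alv :: "nat \<Rightarrow> 'n::finite lat"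
  assumes ij: "i \<noteq> j"
    and Aii: "pairing (al i) (alv i) = 2" and Ajj: "pairing (al j) (alv j) = 2"
    and a: "pairing (al j) (alv i) \<le> 0" and b: "pairing (al i) (alv j) \<le> 0"
    and ab: "pairing (al j) (alv i) = 0 \<longleftrightarrow> pairing (al i) (alv j) = 0"
    and x: "x \<in> WS al alv {i, j}"
    and len: "wl al alv {i, j} x \<le> wl al alv {i, j} (sref al alv i \<circ> x)"
  shows "\<exists>c d. c \<ge> 0 \<and> d \<ge> 0 \<and> (\<forall>v. pairing (al i) (x v) = c * pairing (al i) v + d * pairing (al j) v)"
proof -
  let ?S = "{i, j}"
  let ?a = "pairing (al j) (alv i)"
  let ?b = "pairing (al i) (alv j)"
  obtain ws where ws: "set ws \<subseteq> ?S" "length ws = wl al alv ?S x" "rw al alv ws = x"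
    using wl_word[OF x] by auto
  define n where "n = length ws"
  have A2: "k \<in> ?S \<Longrightarrow> pairing (al k) (alv k) = 2" for k using Aii Ajj by auto
  have nostart: "\<forall>ws'. ws \<noteq> i # ws'"
  proof (intro allI notI)
    fix ws' assume "ws = i # ws'"
    then have "sref al alv i \<circ> x = rw al alv ws'" using ws(3) sref_sref_comp[of al i alv, OF Aii] by auto
    then have "wl al alv ?S (sref al alv i \<circ> x) \<le> length ws'" using wl_le[of ws' ?S al alv] ws(1) \<open>ws = i # ws'\<close> by auto
    then show False using len ws(2) \<open>ws = i # ws'\<close> by simp
  qed
  have norep: "\<forall>xs k ys. ws \<noteq> xs @ k # k # ys"
  proof (intro allI notI)
    fix xs k ys assume e: "ws = xs @ k # k # ys"
    then have "k \<in> ?S" using ws(1) by auto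
    then have "rw al alv ws = rw al alv (xs @ ys)" using e A2 by (simp add: rw_append sref_sref_comp comp_assoc)
    then have "wl al alv ?S x \<le> length (xs @ ys)" using wl_le[of "xs @ ys" ?S al alv] ws e by auto
    then show False using ws(2) e by simp
  qed
  have shape: "ws = altw j i n" unfolding n_def by (rule alt_shape[OF ws(1) ij nostart norep])
  have xform: "\<forall>v. pairing (al i) (x v) = fst (coef ?a ?b n) * pairing (al i) v + snd (coef ?a ?b n) * pairing (al j) v"
    using coef_formula[OF Aii Ajj, of n] shape ws(3) by auto
  show ?thesis
  proof (cases "?a * ?b \<ge> 4")
    case True
    then show ?thesis using infinite_case_inv[OF a b True, of n] xform by blast
  next
    case False
    then obtain m where m: "m \<ge> 1" "\<forall>x y. Sst ?a ?b x y True m = Sst ?a ?b x y False m"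
      "\<forall>n<m. fst (coef ?a ?b n) \<ge> 0 \<and> snd (coef ?a ?b n) \<ge> 0"
      using finite_case[OF a b ab] by force
    have "n < m"
    proof (rule ccontr)
      assume "\<not> n < m"
      then obtain r where r: "n = m + r" by (metis le_Suc_ex not_less)
      define rest where "rest = (if even m then altw j i r else altw i j r)"
      have rs: "set rest \<subseteq> ?S" unfolding rest_def using altw_set[of j i r] altw_set[of i j r] by (auto simp: insert_commute)
      have br: "rw al alv (altw j i m) = rw al alv (altw i j m)"
      proof
        fix v
        show "rw al alv (altw j i m) v = rw al alv (altw i j m) v"
          using rw_state[OF Aii Ajj, of n v] rw_state[OF Aii Ajj, of m v] m(2) by simp
      qed
      obtain m' where m': "m = Suc m'" using m(1) by (cases m) auto
      have "x = rw al alv (altw j i m @ rest)" using shape ws(3) r altw_add rest_def by simp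
      also have "\<dots> = rw al alv (altw i j m @ rest)" by (simp add: rw_append br)
      also have "\<dots> = sref al alv i \<circ> rw al alv (altw j i m' @ rest)" using m' by simp
      finally have "sref al alv i \<circ> x = rw al alv (altw j i m' @ rest)" using sref_sref_comp[of al i alv, OF Aii] by simp
      moreover have "set (altw j i m' @ rest) \<subseteq> ?S" using rs altw_set[of j i m'] by auto
      ultimately have "wl al alv ?S (sref al alv i \<circ> x) \<le> m' + length rest"
        using wl_le[of "altw j i m' @ rest" ?S al alv] by simp
      moreover have "length rest = r" unfolding rest_def by simp
      ultimately show False using len ws(2) n_def r m' by simp
    qed
    then show ?thesis using m(3) xform by blast
  qed
qed



locale KM =
  fixes I :: "nat set" and al :: "nat \<Rightarrow> 'n::finite lat" and alv :: "nat \<Rightarrow> 'n lat"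
  assumes finI: "finite I" and freeal: "free_family I al" and freealv: "free_family I alv"
    and gcm: "gen_cartan_matrix I (cartan al alv)"
begin

lemma Aii: "i \<in> I \<Longrightarrow> pairing (al i) (alv i) = 2"
  using gcm unfolding gen_cartan_matrix_def cartan_def by auto

lemma Aij: "i \<in> I \<Longrightarrow> j \<in> I \<Longrightarrow> i \<noteq> j \<Longrightarrow> pairing (al j) (alv i) \<le> 0"
  using gcm unfolding gen_cartan_matrix_def cartan_def by auto

lemma Aij0: "i \<in> I \<Longrightarrow> j \<in> I \<Longrightarrow> pairing (al j) (alv i) = 0 \<longleftrightarrow> pairing (al i) (alv j) = 0"
  using gcm unfolding gen_cartan_matrix_def cartan_def by auto

definition pos :: "('n lat \<Rightarrow> int) \<Rightarrow> bool" where
  "pos f \<longleftrightarrow> (\<exists>c. (\<forall>m\<in>I. c m \<ge> 0) \<and> (\<forall>v. f v = (\<Sum>m\<in>I. c m * pairing (al m) v)))"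

lemma pos_simple: "i \<in> I \<Longrightarrow> pos (\<lambda>v. pairing (al i) v)"
proof -
  assume i: "i \<in> I"
  have "(\<Sum>m\<in>I. (if m = i then 1 else 0) * pairing (al m) v) = (\<Sum>m\<in>I. if m = i then pairing (al m) v else 0)" for v
    by (rule sum.cong) auto
  then show ?thesis unfolding pos_def using i finI
    by (intro exI[of _ "\<lambda>m. if m = i then 1 else 0"]) (simp add: sum.delta)
qed

lemma pos_comb: assumes "pos f" "pos g" "a \<ge> 0" "b \<ge> 0"
  shows "pos (\<lambda>v. a * f v + b * g v)"
proof -
  obtain c where c: "\<forall>m\<in>I. c m \<ge> 0" "\<forall>v. f v = (\<Sum>m\<in>I. c m * pairing (al m) v)" using assms(1) pos_def by auto
  obtain d where d: "\<forall>m\<in>I. d m \<ge> 0" "\<forall>v. g v = (\<Sum>m\<in>I. d m * pairing (al m) v)" using assms(2) pos_def by auto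
  show ?thesis unfolding pos_def
    apply (rule exI[of _ "\<lambda>m. a * c m + b * d m"])
    using c d assms(3,4) by (auto simp: sum_distrib_left sum.distrib algebra_simps)
qed

lemma pos_nonneg: assumes "pos f" "lam \<in> Ypp I al" shows "f lam \<ge> 0"
proof -
  obtain c where c: "\<forall>m\<in>I. c m \<ge> 0" "\<forall>v. f v = (\<Sum>m\<in>I. c m * pairing (al m) v)" using assms(1) pos_def by auto
  have "(\<Sum>m\<in>I. c m * pairing (al m) lam) \<ge> 0" using c(1) assms(2) by (intro sum_nonneg) (auto simp: Ypp_def)
  then show ?thesis using c(2) by simp
qed

abbreviation "W \<equiv> WS al alv I"
abbreviation "len \<equiv> wl al alv I"
abbreviation "r \<equiv> sref al alv"

lemma KT:
  assumes "u \<in> W" "i \<in> I" "len u \<le> len (r i \<circ> u)"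
  shows "pos (\<lambda>v. pairing (al i) (u v))"
  using assms
proof (induction "len u" arbitrary: u i rule: less_induct)
  case less
  obtain ks where ks: "set ks \<subseteq> I" "length ks = len u" "rw al alv ks = u" using wl_word[OF less.prems(1)] by auto
  show ?case
  proof (cases ks)
    case Nil
    then have "u = id" using ks by simp
    then show ?thesis using pos_simple[OF less.prems(2)] by simp
  next
    case (Cons j js)
    let ?S = "{i, j}"
    have j: "j \<in> I" and js: "set js \<subseteq> I" using ks Cons by auto
    define u' where "u' = rw al alv js"
    have u: "u = r j \<circ> u'" using ks Cons u'_def by simp
    have u'W: "u' \<in> W" using WS_rw[OF js] u'_def by simp
    have lu': "len u' < len u" using wl_le[of js I al alv] js ks Cons u'_def by simp
    have ij: "i \<noteq> j"
    proof
      assume "i = j"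
      then have "r i \<circ> u = u'" using u sref_sref_comp[of al i alv] Aii[OF less.prems(2)] by simp
      then show False using lu' less.prems(3) by simp
    qed
    have SI: "?S \<subseteq> I" using j less.prems(2) by auto
    define B where "B = {v \<in> W. \<exists>x \<in> WS al alv ?S. u = x \<circ> v \<and> wl al alv ?S x + len v \<le> len u}"
    have "u' \<in> B" unfolding B_def
      using u'W u WS_sref[of j ?S al alv] wl_sref[of j ?S al alv] lu' by (intro CollectI conjI bexI[of _ "r j"]) auto
    then obtain v where vB: "v \<in> B" and vmin: "\<forall>v'\<in>B. len v \<le> len v'"
      using ex_has_least_nat[of "\<lambda>v. v \<in> B" u' len] by auto
    then obtain x where vW: "v \<in> W" and x: "x \<in> WS al alv ?S" "u = x \<circ> v" "wl al alv ?S x + len v \<le> len u"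
      unfolding B_def by auto
    have lv: "len v < len u" using vmin \<open>u' \<in> B\<close> lu' by force
    have step: "len v \<le> len (r k \<circ> v)" if k: "k \<in> ?S" for k
    proof (rule ccontr)
      assume "\<not> len v \<le> len (r k \<circ> v)"
      then have lt: "len (r k \<circ> v) < len v" by simp
      have kI: "k \<in> I" using k SI by auto
      have "r k \<circ> v \<in> W" using WS_comp[OF WS_sref[OF kI] vW] .
      moreover have "x \<circ> r k \<in> WS al alv ?S" using WS_comp[OF x(1) WS_sref[OF k]] .
      moreover have "u = (x \<circ> r k) \<circ> (r k \<circ> v)" using x(2) sref_sref_comp[of al k alv v] Aii[OF kI] by (simp only: comp_assoc)
      moreover have "wl al alv ?S (x \<circ> r k) \<le> wl al alv ?S x + 1"
        using wl_comp[OF x(1) WS_sref[OF k]] wl_sref[OF k, of al alv] by simp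
      ultimately have "r k \<circ> v \<in> B" unfolding B_def using x(3) lt by auto
      then show False using vmin lt by force
    qed
    have pi: "pos (\<lambda>w. pairing (al i) (v w))"
      using less.hyps[OF lv vW less.prems(2) step] by simp
    have pj: "pos (\<lambda>w. pairing (al j) (v w))"
      using less.hyps[OF lv vW j step] by simp
    have xlen: "wl al alv ?S x \<le> wl al alv ?S (r i \<circ> x)"
    proof (rule ccontr)
      assume "\<not> ?thesis"
      then have lt: "wl al alv ?S (r i \<circ> x) < wl al alv ?S x" by simp
      have rix: "r i \<circ> x \<in> WS al alv ?S" using WS_comp[OF WS_sref x(1)] by simp
      have "len (r i \<circ> u) = len ((r i \<circ> x) \<circ> v)" using x(2) by (simp add: comp_assoc)
      also have "\<dots> \<le> len (r i \<circ> x) + len v" using wl_comp[OF WS_mono[OF SI rix] vW] .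
      also have "\<dots> \<le> wl al alv ?S (r i \<circ> x) + len v" using wl_mono[OF SI rix] by simp
      finally show False using lt x(3) less.prems(3) by simp
    qed
    obtain c d where cd: "c \<ge> 0" "d \<ge> 0" "\<forall>w. pairing (al i) (x w) = c * pairing (al i) w + d * pairing (al j) w"
      using R2[OF ij Aii[OF less.prems(2)] Aii[OF j] Aij[OF less.prems(2) j ij] Aij[OF j less.prems(2)] _ x(1) xlen]
        ij Aij0[OF less.prems(2) j] by force
    have "pos (\<lambda>w. c * pairing (al i) (v w) + d * pairing (al j) (v w))"
      by (rule pos_comb[OF pi pj cd(1,2)])
    then show ?thesis using cd(3) x(2) by simp
  qed
qed

end



context KM begin

abbreviation "le x y \<equiv> leQ I alv x y"

lemma leQ_iff: "le x y \<longleftrightarrow> (\<exists>m::nat\<Rightarrow>nat. \<forall>k. y k - x k = (\<Sum>i\<in>I. int (m i) * alv i k))"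
proof -
  have "le x y \<longleftrightarrow> (\<exists>m::nat\<Rightarrow>nat. (\<lambda>k. y k - x k) = (\<lambda>k. \<Sum>i\<in>I. int (m i) * alv i k))"
    unfolding leQ_def Qvee_plus_def by blast
  then show ?thesis by (simp add: fun_eq_iff)
qed

lemma leQ_refl: "le x x"
  unfolding leQ_iff by (intro exI[of _ "\<lambda>_. 0"]) simp

lemma leQ_trans: assumes "le x y" "le y z" shows "le x z"
proof -
  obtain m where m: "\<forall>k. y k - x k = (\<Sum>i\<in>I. int (m i) * alv i k)" using assms(1) leQ_iff by auto
  obtain m' where m': "\<forall>k. z k - y k = (\<Sum>i\<in>I. int (m' i) * alv i k)" using assms(2) leQ_iff by auto
  show ?thesis unfolding leQ_iff
  proof (intro exI[of _ "\<lambda>i. m i + m' i"] allI)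
    fix k
    have "z k - x k = (y k - x k) + (z k - y k)" by simp
    also have "\<dots> = (\<Sum>i\<in>I. int (m i + m' i) * alv i k)" using m m' by (simp add: sum.distrib[symmetric] algebra_simps)
    finally show "z k - x k = (\<Sum>i\<in>I. int (m i + m' i) * alv i k)" .
  qed
qed

lemma leQ_step: assumes "i \<in> I" "c \<ge> 0" shows "le (\<lambda>k. x k - c * alv i k) x"
  unfolding leQ_iff
proof (intro exI[of _ "\<lambda>l. if l = i then nat c else 0"] allI)
  fix k
  have "(\<Sum>l\<in>I. int (if l = i then nat c else 0) * alv l k) = (\<Sum>l\<in>I. if l = i then c * alv l k else 0)"
    using assms(2) by (intro sum.cong) auto
  also have "\<dots> = c * alv i k" using assms(1) finI by (simp add: sum.delta)
  finally show "x k - (x k - c * alv i k) = (\<Sum>l\<in>I. int (if l = i then nat c else 0) * alv l k)" by simp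
qed

lemma leQ_antisym: assumes "le x y" "le y x" shows "x = y"
proof -
  obtain m where m: "\<forall>k. y k - x k = (\<Sum>i\<in>I. int (m i) * alv i k)" using assms(1) leQ_iff by auto
  obtain m' where m': "\<forall>k. x k - y k = (\<Sum>i\<in>I. int (m' i) * alv i k)" using assms(2) leQ_iff by auto
  have "\<forall>k. (\<Sum>i\<in>I. (int (m i) + int (m' i)) * alv i k) = 0"
  proof
    fix k
    have "(\<Sum>i\<in>I. (int (m i) + int (m' i)) * alv i k) = (y k - x k) + (x k - y k)"
      using m m' by (simp add: sum.distrib algebra_simps)
    then show "(\<Sum>i\<in>I. (int (m i) + int (m' i)) * alv i k) = 0" by simp
  qed
  then have "\<forall>i\<in>I. int (m i) + int (m' i) = 0"
    using freealv[unfolded free_family_def, rule_format, of "\<lambda>i. int (m i) + int (m' i)"] by blast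
  then have "\<forall>i\<in>I. m i = 0" by auto
  then have "\<forall>k. y k - x k = 0" using m by simp
  then show ?thesis by (auto simp: fun_eq_iff)
qed

lemma leQ_interval_finite: "finite {nu. le mu nu \<and> le nu j}"
proof (cases "{nu. le mu nu \<and> le nu j} = {}")
  case True then show ?thesis by (subst True) simp
next
  case False
  then obtain nu0 where "le mu nu0" "le nu0 j" by auto
  then obtain m0 m0' where m0: "\<forall>k. nu0 k - mu k = (\<Sum>i\<in>I. int (m0 i) * alv i k)"
    and m0': "\<forall>k. j k - nu0 k = (\<Sum>i\<in>I. int (m0' i) * alv i k)" unfolding leQ_iff by blast
  define C where "C i = m0 i + m0' i" for i
  define g where "g f = (\<lambda>k. mu k + (\<Sum>i\<in>I. int (f i) * alv i k))" for f :: "nat \<Rightarrow> nat"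
  have "{nu. le mu nu \<and> le nu j} \<subseteq> g ` (PiE I (\<lambda>i. {..C i}))"
  proof
    fix nu assume "nu \<in> {nu. le mu nu \<and> le nu j}"
    then obtain m m' where m: "\<forall>k. nu k - mu k = (\<Sum>i\<in>I. int (m i) * alv i k)"
      and m': "\<forall>k. j k - nu k = (\<Sum>i\<in>I. int (m' i) * alv i k)" unfolding leQ_iff by blast
    have "\<forall>k. (\<Sum>i\<in>I. (int (m i) + int (m' i) - int (C i)) * alv i k) = 0"
    proof
      fix k
      have "(\<Sum>i\<in>I. (int (m i) + int (m' i) - int (C i)) * alv i k) = (nu k - mu k) + (j k - nu k) - ((nu0 k - mu k) + (j k - nu0 k))"
        using m m' m0 m0' by (simp add: C_def sum.distrib sum_subtractf algebra_simps)
      then show "(\<Sum>i\<in>I. (int (m i) + int (m' i) - int (C i)) * alv i k) = 0" by simp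
    qed
    then have "\<forall>i\<in>I. int (m i) + int (m' i) - int (C i) = 0"
      using freealv[unfolded free_family_def, rule_format, of "\<lambda>i. int (m i) + int (m' i) - int (C i)"] by blast
    then have mC: "\<forall>i\<in>I. m i \<le> C i" by force
    have "nu = g ((\<lambda>i. if i \<in> I then m i else undefined))"
    proof -
      have "(\<Sum>i\<in>I. int ((\<lambda>i. if i \<in> I then m i else undefined) i) * alv i k) = (\<Sum>i\<in>I. int (m i) * alv i k)" for k
        by (rule sum.cong) auto
      then show ?thesis unfolding g_def using m by (auto simp: fun_eq_iff algebra_simps)
    qed
    moreover have "(\<lambda>i. if i \<in> I then m i else undefined) \<in> PiE I (\<lambda>i. {..C i})" using mC by auto
    ultimately show "nu \<in> g ` (PiE I (\<lambda>i. {..C i}))" by blast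
  qed
  moreover have "finite (PiE I (\<lambda>i. {..C i}))" using finI by (intro finite_PiE) auto
  ultimately show ?thesis using finite_subset by blast
qed

lemma dominance: assumes "lam \<in> Ypp I al" "u \<in> W" shows "le (u lam) lam"
  using assms(2)
proof (induction "len u" arbitrary: u rule: less_induct)
  case less
  obtain ks where ks: "set ks \<subseteq> I" "length ks = len u" "rw al alv ks = u" using wl_word[OF less.prems(1)] by auto
  show ?case
  proof (cases ks)
    case Nil then show ?thesis using ks leQ_refl by auto
  next
    case (Cons i js)
    have i: "i \<in> I" and js: "set js \<subseteq> I" using ks Cons by auto
    define u' where "u' = rw al alv js"
    have u: "u = r i \<circ> u'" using ks Cons u'_def by simp
    have u'W: "u' \<in> W" using WS_rw[OF js] u'_def by simp
    have lu': "len u' < len u" using wl_le[of js I al alv] js ks Cons u'_def by simp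
    have "len u' \<le> len (r i \<circ> u')" using lu' u by simp
    then have "pos (\<lambda>v. pairing (al i) (u' v))" using KT[OF u'W i] by simp
    then have c: "pairing (al i) (u' lam) \<ge> 0" using pos_nonneg assms(1) by blast
    have "u lam = (\<lambda>k. u' lam k - pairing (al i) (u' lam) * alv i k)" using u by (simp add: sref_def)
    then have "le (u lam) (u' lam)" using leQ_step[OF i c] by simp
    then show ?thesis using less.hyps[OF lu' u'W] leQ_trans by blast
  qed
qed

end



lemma rw_rev_inv: assumes "\<And>i. i \<in> set ws \<Longrightarrow> pairing (al i) (alv i) = 2"
  shows "rw al alv (rev ws) \<circ> rw al alv ws = id"
  using assms
proof (induction ws)
  case Nil then show ?case by simp
next
  case (Cons i ws)
  have "rw al alv (rev (i # ws)) \<circ> rw al alv (i # ws) = rw al alv (rev ws) \<circ> (sref al alv i \<circ> (sref al alv i \<circ> rw al alv ws))"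
    by (simp add: rw_append comp_assoc)
  also have "\<dots> = rw al alv (rev ws) \<circ> rw al alv ws" using sref_sref_comp[of al i alv "rw al alv ws"] Cons.prems[of i] by simp
  also have "\<dots> = id" using Cons.IH Cons.prems by (auto simp: comp_def id_def)
  finally show ?case .
qed

context KM begin

lemma W_inv: assumes "u \<in> W" shows "\<exists>u'\<in>W. \<forall>v. u' (u v) = v"
proof -
  obtain ws where ws: "set ws \<subseteq> I" "u = rw al alv ws" using assms unfolding WS_def by auto
  have "rw al alv (rev ws) \<circ> rw al alv ws = id" using ws(1) Aii by (intro rw_rev_inv) auto
  moreover have "rw al alv (rev ws) \<in> W" using ws(1) by (intro WS_rw) auto
  ultimately show ?thesis using ws(2) by (metis comp_apply id_apply)
qed

lemma id_W: "id \<in> W" using WS_rw[of "[]" I al alv] by simp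

lemma Eorb_eq: "Eorb I al alv lam mu = (if \<exists>w\<in>W. mu = w lam then 1 else 0)"
  unfolding Eorb_def weyl_WS by auto

lemma orbit_unique: assumes "lam \<in> Ypp I al" "lam' \<in> Ypp I al" "u \<in> W" "lam = u lam'"
  shows "lam = lam'"
proof -
  have 1: "le lam lam'" using dominance[OF assms(2,3)] assms(4) by simp
  obtain u' where u': "u' \<in> W" "\<forall>v. u' (u v) = v" using W_inv[OF assms(3)] by auto
  have "lam' = u' lam" using u' assms(4) by simp
  then have 2: "le lam' lam" using dominance[OF assms(1) u'(1)] by simp
  show ?thesis using leQ_antisym[OF 1 2] .
qed

lemma af_subset: "almost_finite I alv F \<Longrightarrow> E \<subseteq> F \<Longrightarrow> almost_finite I alv E"
  unfolding almost_finite_def by blast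

lemma summable_part:
  fixes x :: "'n lat \<Rightarrow> 'r::comm_ring_1"
  assumes x: "x \<in> AF I al alv"
  shows "summable_fam I alv (Ypp I al) (\<lambda>lam mu. x lam * Eorb I al alv lam mu)"
proof -
  obtain J where J: "finite J" "\<forall>e\<in>supp x. \<exists>j\<in>J. le e j" using x unfolding AF_def almost_finite_def by auto
  have orb: "Eorb I al alv lam mu \<noteq> 0 \<Longrightarrow> lam \<in> Ypp I al \<Longrightarrow> le mu lam" for lam mu
    using dominance by (auto simp: Eorb_eq split: if_splits)
  have a: "\<forall>lam\<in>Ypp I al. (\<lambda>mu. x lam * Eorb I al alv lam mu) \<in> series I alv"
  proof
    fix lam assume lam: "lam \<in> Ypp I al"
    have "\<forall>e\<in>supp (\<lambda>mu. x lam * Eorb I al alv lam mu). \<exists>j\<in>{lam}. le e j"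
    proof
      fix e assume "e \<in> supp (\<lambda>mu. x lam * Eorb I al alv lam mu)"
      then have "Eorb I al alv lam e \<noteq> (0::'r)" by (auto simp: supp_def)
      then show "\<exists>j\<in>{lam}. le e j" using orb lam by auto
    qed
    then show "(\<lambda>mu. x lam * Eorb I al alv lam mu) \<in> series I alv"
      unfolding series_def almost_finite_def by blast
  qed
  have b: "finite {lam \<in> Ypp I al. x lam * Eorb I al alv lam mu \<noteq> 0}" for mu
  proof -
    have "{lam \<in> Ypp I al. x lam * Eorb I al alv lam mu \<noteq> 0} \<subseteq> (\<Union>j\<in>J. {nu. le mu nu \<and> le nu j})"
    proof
      fix lam assume "lam \<in> {lam \<in> Ypp I al. x lam * Eorb I al alv lam mu \<noteq> 0}"
      then have "lam \<in> Ypp I al" "x lam \<noteq> 0" "Eorb I al alv lam mu \<noteq> (0::'r)" by auto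
      then show "lam \<in> (\<Union>j\<in>J. {nu. le mu nu \<and> le nu j})" using orb J(2) by (auto simp: supp_def)
    qed
    moreover have "finite (\<Union>j\<in>J. {nu. le mu nu \<and> le nu j})" using J(1) leQ_interval_finite by auto
    ultimately show ?thesis using finite_subset by blast
  qed
  have c: "almost_finite I alv (\<Union>lam\<in>Ypp I al. supp (\<lambda>mu. x lam * Eorb I al alv lam mu))"
    unfolding almost_finite_def
  proof (intro exI[of _ J] conjI ballI)
    show "finite J" by (rule J(1))
  next
    fix e assume "e \<in> (\<Union>lam\<in>Ypp I al. supp (\<lambda>mu. x lam * Eorb I al alv lam mu))"
    then obtain lam where "lam \<in> Ypp I al" "x lam \<noteq> 0" "Eorb I al alv lam e \<noteq> (0::'r)"
      by (auto simp: supp_def) (metis mult_zero_left mult_zero_right)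
    then show "\<exists>j\<in>J. le e j" using orb J(2) leQ_trans by (fastforce simp: supp_def)
  qed
  show ?thesis unfolding summable_fam_def using a b c by blast
qed

end



lemma mult_ne0: "(a::'a::mult_zero) * b \<noteq> 0 \<Longrightarrow> a \<noteq> 0 \<and> b \<noteq> 0" by auto

context KM begin

lemma Eorb_inv: assumes "w \<in> W" shows "Eorb I al alv lam (w mu) = Eorb I al alv lam mu"
proof -
  obtain w' where w': "w' \<in> W" "\<forall>v. w' (w v) = v" using W_inv[OF assms] by auto
  have "(\<exists>u\<in>W. w mu = u lam) \<longleftrightarrow> (\<exists>u\<in>W. mu = u lam)"
  proof
    assume "\<exists>u\<in>W. w mu = u lam"
    then obtain u where "u \<in> W" "w mu = u lam" by auto
    then have "w' \<circ> u \<in> W" "mu = (w' \<circ> u) lam"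
    proof -
      show "w' \<circ> u \<in> W" using WS_comp[OF w'(1) \<open>u \<in> W\<close>] .
      have "mu = w' (w mu)" using w'(2) by simp
      then show "mu = (w' \<circ> u) lam" using \<open>w mu = u lam\<close> by simp
    qed
    then show "\<exists>u\<in>W. mu = u lam" by blast
  next
    assume "\<exists>u\<in>W. mu = u lam"
    then obtain u where "u \<in> W" "mu = u lam" by auto
    then have "w \<circ> u \<in> W" "w mu = (w \<circ> u) lam" using WS_comp[OF assms \<open>u \<in> W\<close>] by auto
    then show "\<exists>u\<in>W. w mu = u lam" by blast
  qed
  then show ?thesis unfolding Eorb_eq by simp
qed

lemma Emap_dom:
  fixes x :: "'n lat \<Rightarrow> 'r::comm_ring_1"
  assumes x: "x \<in> AF I al alv" and lam: "lam \<in> Ypp I al"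
  shows "Emap I al alv x lam = x lam"
proof -
  let ?S = "{l \<in> Ypp I al. x l * Eorb I al alv l lam \<noteq> 0}"
  have sub: "?S \<subseteq> {lam}"
  proof
    fix l assume "l \<in> ?S"
    then have l0: "l \<in> Ypp I al" "x l * Eorb I al alv l lam \<noteq> (0::'r)" by simp_all
    then have l: "l \<in> Ypp I al" "Eorb I al alv l lam \<noteq> (0::'r)" using mult_ne0[OF l0(2)] by simp_all
    then have "\<exists>w\<in>W. lam = w l" unfolding Eorb_eq by (cases "\<exists>w\<in>W. lam = w l") simp_all
    then obtain w where "w \<in> W" "lam = w l" by blast
    then have "lam = l" by (rule orbit_unique[OF lam l(1)])
    then show "l \<in> {lam}" by simp
  qed
  have "\<exists>w\<in>W. lam = w lam" using id_W by (intro bexI[of _ id]) simp_all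
  then have E1: "Eorb I al alv lam lam = (1::'r)" unfolding Eorb_eq by simp
  have em: "Emap I al alv x lam = (\<Sum>l\<in>?S. x l * Eorb I al alv l lam)" unfolding Emap_def fam_sum_def by (rule refl)
  show ?thesis
  proof (cases "x lam = 0")
    case True
    then have "?S = {}" using sub by auto
    then show ?thesis using True em by simp
  next
    case False
    have "lam \<in> ?S" using False E1 lam by simp
    then have "?S = {lam}" using sub by blast
    then show ?thesis using E1 em by simp
  qed
qed

lemma Emap_in:
  fixes x :: "'n lat \<Rightarrow> 'r::comm_ring_1"
  assumes x: "x \<in> AF I al alv"
  shows "Emap I al alv x \<in> inv_series I al alv"
proof -
  have sf: "summable_fam I alv (Ypp I al) (\<lambda>lam mu. x lam * Eorb I al alv lam mu)" by (rule summable_part[OF x])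
  have "supp (Emap I al alv x) \<subseteq> (\<Union>lam\<in>Ypp I al. supp (\<lambda>mu. x lam * Eorb I al alv lam mu))"
  proof
    fix mu assume "mu \<in> supp (Emap I al alv x)"
    then have ne: "Emap I al alv x mu \<noteq> 0" by (simp add: supp_def)
    have "{l \<in> Ypp I al. x l * Eorb I al alv l mu \<noteq> 0} \<noteq> {}"
    proof
      assume "{l \<in> Ypp I al. x l * Eorb I al alv l mu \<noteq> 0} = {}"
      then have "Emap I al alv x mu = 0" unfolding Emap_def fam_sum_def by (simp only: sum.empty)
      then show False using ne by simp
    qed
    then show "mu \<in> (\<Union>lam\<in>Ypp I al. supp (\<lambda>mu. x lam * Eorb I al alv lam mu))" by (auto simp: supp_def)
  qed
  then have "Emap I al alv x \<in> series I alv" using sf unfolding summable_fam_def series_def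
    using af_subset by blast
  moreover have "\<forall>w\<in>weyl I al alv. \<forall>mu. Emap I al alv x (w mu) = Emap I al alv x mu"
    unfolding weyl_WS Emap_def fam_sum_def by (simp add: Eorb_inv)
  ultimately show ?thesis unfolding inv_series_def by simp
qed

lemma upward:
  fixes a :: "'n lat \<Rightarrow> 'r::comm_ring_1"
  assumes a: "a \<in> inv_series I al alv" and mu: "a mu \<noteq> 0"
  shows "\<exists>u\<in>W. \<exists>lam\<in>Ypp I al. mu = u lam"
proof -
  have ainv: "\<forall>w\<in>W. \<forall>v. a (w v) = a v" using a unfolding inv_series_def weyl_WS by auto
  obtain J where J: "finite J" "\<forall>e\<in>supp a. \<exists>j\<in>J. le e j" using a unfolding inv_series_def series_def almost_finite_def by auto
  define F where "F = (\<Union>j\<in>J. {nu. le mu nu \<and> le nu j})"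
  have Ffin: "finite F" unfolding F_def using J(1) leQ_interval_finite by auto
  have inF: "nu \<in> F" if "w \<in> W" "nu = w mu" "le mu nu" for w nu
  proof -
    have "a nu \<noteq> 0" using ainv that mu by auto
    then obtain j where "j \<in> J" "le nu j" using J(2) by (auto simp: supp_def)
    then show ?thesis using that unfolding F_def by auto
  qed
  have main: "\<And>nu w. w \<in> W \<Longrightarrow> nu = w mu \<Longrightarrow> le mu nu \<Longrightarrow> \<exists>u\<in>W. \<exists>lam\<in>Ypp I al. mu = u lam"
  proof -
    fix nu w
    show "w \<in> W \<Longrightarrow> nu = w mu \<Longrightarrow> le mu nu \<Longrightarrow> \<exists>u\<in>W. \<exists>lam\<in>Ypp I al. mu = u lam"
    proof (induction "card {nu' \<in> F. le nu nu' \<and> nu' \<noteq> nu}" arbitrary: nu w rule: less_induct)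
      case less
      show ?case
      proof (cases "nu \<in> Ypp I al")
        case True
        obtain w' where w': "w' \<in> W" "\<forall>v. w' (w v) = v" using W_inv[OF less.prems(1)] by auto
        have "mu = w' nu" using w'(2) less.prems(2) by simp
        then show ?thesis using w'(1) True by blast
      next
        case False
        then obtain i where i: "i \<in> I" "pairing (al i) nu < 0" unfolding Ypp_def by force
        define p where "p = pairing (al i) nu"
        define nu' where "nu' = r i nu"
        have nu'eq: "nu = (\<lambda>k. nu' k - (- p) * alv i k)" unfolding nu'_def sref_def p_def by auto
        have pn: "- p \<ge> 0" using i(2) unfolding p_def by simp
        have le1: "le nu nu'" by (subst nu'eq) (rule leQ_step[OF i(1) pn])
        have ne: "nu' \<noteq> nu"
        proof
          assume "nu' = nu"
          have "nu k = nu' k - (- p) * alv i k" for k using fun_cong[OF nu'eq, of k] by simp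
          then have "\<forall>k. p * alv i k = 0" using \<open>nu' = nu\<close> by simp
          moreover have "p \<noteq> 0" using pn i(2) unfolding p_def by simp
          ultimately have "alv i = (\<lambda>k. 0)" by auto
          then show False using Aii[OF i(1)] by (simp add: pairing_def)
        qed
        have w2: "r i \<circ> w \<in> W" using WS_comp[OF WS_sref[OF i(1)] less.prems(1)] .
        have nu'w: "nu' = (r i \<circ> w) mu" using less.prems(2) nu'_def by simp
        have le2: "le mu nu'" using leQ_trans[OF less.prems(3) le1] .
        have sub: "{nu'' \<in> F. le nu' nu'' \<and> nu'' \<noteq> nu'} \<subset> {nu'' \<in> F. le nu nu'' \<and> nu'' \<noteq> nu}"
        proof
          show "{nu'' \<in> F. le nu' nu'' \<and> nu'' \<noteq> nu'} \<subseteq> {nu'' \<in> F. le nu nu'' \<and> nu'' \<noteq> nu}"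
          proof
            fix z assume z: "z \<in> {nu'' \<in> F. le nu' nu'' \<and> nu'' \<noteq> nu'}"
            then have "le nu z" using leQ_trans[OF le1] by blast
            moreover have "z \<noteq> nu"
            proof
              assume "z = nu"
              then have "le nu' nu" using z by simp
              then show False using leQ_antisym[OF le1] ne z \<open>z = nu\<close> by auto
            qed
            ultimately show "z \<in> {nu'' \<in> F. le nu nu'' \<and> nu'' \<noteq> nu}" using z by auto
          qed
        next
          have "nu' \<in> F" using inF[OF w2 nu'w le2] .
          then have "nu' \<in> {nu'' \<in> F. le nu nu'' \<and> nu'' \<noteq> nu}" using le1 ne by auto
          moreover have "nu' \<notin> {nu'' \<in> F. le nu' nu'' \<and> nu'' \<noteq> nu'}" by auto
          ultimately show "{nu'' \<in> F. le nu' nu'' \<and> nu'' \<noteq> nu'} \<noteq> {nu'' \<in> F. le nu nu'' \<and> nu'' \<noteq> nu}" by blast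
        qed
        have "card {nu'' \<in> F. le nu' nu'' \<and> nu'' \<noteq> nu'} < card {nu'' \<in> F. le nu nu'' \<and> nu'' \<noteq> nu}"
          using psubset_card_mono[OF _ sub] Ffin by auto
        then show ?thesis using less.hyps[OF _ w2 nu'w le2] by blast
      qed
    qed
  qed
  show ?thesis using main[OF id_W _ leQ_refl] by simp
qed

lemma surj_part:
  fixes a :: "'n lat \<Rightarrow> 'r::comm_ring_1"
  assumes a: "a \<in> inv_series I al alv"
  shows "\<exists>x\<in>AF I al alv. Emap I al alv x = a"
proof -
  have ainv: "\<forall>w\<in>W. \<forall>v. a (w v) = a v" using a unfolding inv_series_def weyl_WS by auto
  define x where "x = (\<lambda>l. if l \<in> Ypp I al then a l else 0)"
  have "supp x \<subseteq> supp a" unfolding x_def supp_def by auto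
  then have xAF: "x \<in> AF I al alv" unfolding AF_def using a af_subset
    unfolding inv_series_def series_def x_def by auto
  have "Emap I al alv x mu = a mu" for mu
  proof (cases "a mu = 0")
    case True
    have "{l \<in> Ypp I al. x l * Eorb I al alv l mu \<noteq> 0} = {}"
    proof (rule ccontr)
      assume "\<not> ?thesis"
      then obtain l where l0: "l \<in> Ypp I al" "x l * Eorb I al alv l mu \<noteq> (0::'r)" by blast
      then have l: "l \<in> Ypp I al" "x l \<noteq> 0" "Eorb I al alv l mu \<noteq> (0::'r)" using mult_ne0[OF l0(2)] by simp_all
      then have "\<exists>w\<in>W. mu = w l" unfolding Eorb_eq by (cases "\<exists>w\<in>W. mu = w l") simp_all
      then obtain w where "w \<in> W" "mu = w l" by blast
      then have "a mu = a l" using ainv by auto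
      then show False using True l x_def by auto
    qed
    then show ?thesis using True unfolding Emap_def fam_sum_def by simp
  next
    case False
    obtain u lam0 where u: "u \<in> W" "lam0 \<in> Ypp I al" "mu = u lam0" using upward[OF a False] by auto
    have alam0: "a lam0 = a mu" using ainv u by auto
    have "\<exists>w\<in>W. mu = w lam0" using u by blast
    then have E1: "Eorb I al alv lam0 mu = (1::'r)" unfolding Eorb_eq by simp
    have "{l \<in> Ypp I al. x l * Eorb I al alv l mu \<noteq> 0} = {lam0}"
    proof
      show "{l \<in> Ypp I al. x l * Eorb I al alv l mu \<noteq> 0} \<subseteq> {lam0}"
      proof
        fix l assume "l \<in> {l \<in> Ypp I al. x l * Eorb I al alv l mu \<noteq> 0}"
        then have l0: "l \<in> Ypp I al" "x l * Eorb I al alv l mu \<noteq> (0::'r)" by simp_all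
        then have l: "l \<in> Ypp I al" "Eorb I al alv l mu \<noteq> (0::'r)" using mult_ne0[OF l0(2)] by simp_all
        then have "\<exists>w\<in>W. mu = w l" unfolding Eorb_eq by (cases "\<exists>w\<in>W. mu = w l") simp_all
        then obtain w where w: "w \<in> W" "mu = w l" by blast
        obtain u' where u': "u' \<in> W" "\<forall>v. u' (u v) = v" using W_inv[OF u(1)] by auto
        have e: "lam0 = (u' \<circ> w) l" using u' u w by simp
        have uw: "u' \<circ> w \<in> W" using WS_comp[OF u'(1) w(1)] .
        have "lam0 = l" by (rule orbit_unique[OF u(2) l(1) uw e])
        then show "l \<in> {lam0}" by simp
      qed
    next
      show "{lam0} \<subseteq> {l \<in> Ypp I al. x l * Eorb I al alv l mu \<noteq> 0}"
        using E1 u(2) alam0 False x_def by auto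
    qed
    then show ?thesis using E1 alam0 u(2) x_def unfolding Emap_def fam_sum_def by simp
  qed
  then show ?thesis using xAF by auto
qed

lemma supp_part:
  fixes a :: "'n lat \<Rightarrow> 'r::comm_ring_1"
  assumes a: "a \<in> inv_series I al alv"
  shows "supp a \<subseteq> Yp I al alv"
proof
  fix mu assume "mu \<in> supp a"
  then have "a mu \<noteq> 0" by (simp add: supp_def)
  then obtain u lam where "u \<in> W" "lam \<in> Ypp I al" "mu = u lam" using upward[OF a] by blast
  then show "mu \<in> Yp I al alv" unfolding Yp_def weyl_WS by auto
qed

lemma bij_part: "bij_betw (Emap I al alv) (AF I al alv) (inv_series I al alv :: ('n lat \<Rightarrow> 'r::comm_ring_1) set)"
  unfolding bij_betw_def
proof
  show "inj_on (Emap I al alv) (AF I al alv :: ('n lat \<Rightarrow> 'r) set)"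
  proof (rule inj_onI)
    fix x y :: "'n lat \<Rightarrow> 'r"
    assume x: "x \<in> AF I al alv" and y: "y \<in> AF I al alv" and e: "Emap I al alv x = Emap I al alv y"
    show "x = y"
    proof
      fix l show "x l = y l"
      proof (cases "l \<in> Ypp I al")
        case True then show ?thesis using Emap_dom[OF x True] Emap_dom[OF y True] e by simp
      next
        case False then show ?thesis using x y unfolding AF_def by auto
      qed
    qed
  qed
next
  show "Emap I al alv ` AF I al alv = (inv_series I al alv :: ('n lat \<Rightarrow> 'r) set)"
    using Emap_in surj_part by blast
qed

end

theorem mainTheorem3:
  fixes I :: "nat set"
    and al :: "nat \<Rightarrow> 'n::finite lat"
    and alv :: "nat \<Rightarrow> 'n lat"
  assumes "finite I"
    and "free_family I al"
    and "free_family I alv"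
    and "gen_cartan_matrix I (cartan al alv)"
  shows "(\<forall>x \<in> (AF I al alv :: ('n lat \<Rightarrow> 'r::comm_ring_1) set).
            summable_fam I alv (Ypp I al) (\<lambda>lam mu. x lam * Eorb I al alv lam mu))
       \<and> bij_betw (Emap I al alv) (AF I al alv) (inv_series I al alv :: ('n lat \<Rightarrow> 'r) set)
       \<and> (\<forall>a \<in> (inv_series I al alv :: ('n lat \<Rightarrow> 'r) set). supp a \<subseteq> Yp I al alv)"
proof -
  interpret KM I al alv using assms by unfold_locales
  show ?thesis using summable_part bij_part supp_part by blast
qed


end
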